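(* Assume $|V|\ge 3$. Suppose the notion of strategic manipulation is modified by dropping the requirement that all colluders in $C$ have the same most preferred value in the type vector $\vec\theta$ of condition (b). Then there is no $(c,f)$-resilient consensus protocol for any $c\ge 2$. Moreover, if in addition condition (b) is strengthened to require that no colluder is worse off (in addition to some colluder being strictly better off), there is still no $(c,f)$-resilient consensus protocol for any $c\ge 2$ and $f\ge 1$.
   Context: Model. There are $n$ agents $\Pi=\{1,\dots,n\}$ proceeding in synchronous rounds $1,2,\dots$. In each round every agent first chooses, for each agent $j$, a message to send to $j$ or no message; then it receives the messages sent to it in that round; then it updates its local state. Channels are reliable. A failure pattern $F$ is a subset of $\{(i,j,r)\}$, where $(i,j,r)\in F$ means $i$'s round-$r$ message to $j$ would be delivered if sent; if $(i,j,r)\notin F$ then $(i,j',r')\notin F$ for all $j'$ and $r'>r$. Agent $i$ is correct if $(i,j,r)\in F$ for all $j,r$, faulty otherwise. In a system with at most $f$ crash failures only failure patterns with at most $f$ faulty agents occur. $V$ is a finite set of proposal values; the private type $\theta_i$ is a strict total order on $V$. A (deterministic) strategy $s_i$ maps $\theta_i$ to a function from (round $r$, messages received in rounds $1..r$) to (messages for round $r+1$, a decision in $V\cup\{\top\}$ or $\bot$), $\top\notin V$; each agent decides at most once. A protocol is a profile $\vec s$; the run $R(F,\vec\theta,\vec s)$ is determined. Legal profile: for every admissible $F$ and every $\vec\theta$: Termination (every correct agent eventually decides), Uniform Agreement (no two agents decide differently), Validity (any decision is an element of $V$ that is the most preferred value of some agent). Utility of $i$: $0$ if $i$ crashes in $F$;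 if consensus holds with decision $d$, a positive value strictly increasing in $i$'s preference for $d$; $-\infty$ if consensus is violated. Colluders $C$ may use strategies depending on all colluders' types. Original definition: $C$ can strategically manipulate a legal $\vec s$ if there is $\vec s'_C$ with (a) $(\vec s_{-C},\vec s'_C)$ legal, and (b) some admissible $F$ and some $\vec\theta$ in which all members of $C$ have the same most preferred value, such that some $i\in C$ has strictly higher utility under $(\vec s_{-C},\vec s'_C)$ than under $\vec s$. A $(c,f)$-resilient consensus protocol is a legal profile that no group of size at most $c$ can strategically manipulate, in a system with at most $f$ crash failures. *)

theory Defs
  imports Main "HOL-Library.Extended_Real"
begin

text \<open>Agents form a finite type 'ag (so n = CARD('ag)); proposal values form a
finite type 'v (so V = UNIV and |V| = CARD('v)); messages have an arbitrary type 'm.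
A type (preference) is a relation theta on 'v; (x, y) in theta means that y is
strictly preferred to x.\<close>

datatype 'v dec = Val 'v | TopDec  \<comment> \<open>V extended with the special value top\<close>

type_synonym 'ag failure_pattern = "('ag \<times> 'ag \<times> nat) set"

text \<open>Messages received by an agent: round k (k >= 1) and sender i give the
message received (None = no message).\<close>
type_synonym ('ag, 'm) hist = "nat \<Rightarrow> 'ag \<Rightarrow> 'm option"

text \<open>Given round r and the messages received in rounds 1..r, produce the messages
for round r+1 (per recipient) and a decision (None = bottom, i.e. no decision).\<close>
type_synonym ('ag, 'm, 'v) behaviour =
  "nat \<Rightarrow> ('ag, 'm) hist \<Rightarrow> ('ag \<Rightarrow> 'm option) \<times> 'v dec option"

type_synonym ('ag, 'm, 'v) strategy = "'v rel \<Rightarrow> ('ag, 'm, 'v) behaviour"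

text \<open>Generalized profile: each agent's behaviour may depend on the whole type
vector (needed for colluders, whose strategies depend on all colluders' types).\<close>
type_synonym ('ag, 'm, 'v) gprofile = "'ag \<Rightarrow> ('ag \<Rightarrow> 'v rel) \<Rightarrow> ('ag, 'm, 'v) behaviour"

definition is_top :: "'v rel \<Rightarrow> 'v \<Rightarrow> bool" where
  "is_top th v \<longleftrightarrow> (\<forall>w. w \<noteq> v \<longrightarrow> (w, v) \<in> th)"

definition admissible_types :: "('ag \<Rightarrow> 'v rel) \<Rightarrow> bool" where
  "admissible_types th \<longleftrightarrow> (\<forall>i. strict_linear_order (th i))"

definition correct :: "'ag failure_pattern \<Rightarrow> 'ag \<Rightarrow> bool" where
  "correct F i \<longleftrightarrow> (\<forall>j r. (i, j, r) \<in> F)"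

definition admissible_fp :: "nat \<Rightarrow> 'ag failure_pattern \<Rightarrow> bool" where
  "admissible_fp f F \<longleftrightarrow>
     (\<forall>i j r j' r'. (i, j, r) \<notin> F \<longrightarrow> r' > r \<longrightarrow> (i, j', r') \<notin> F) \<and>
     card {i. \<not> correct F i} \<le> f"

primrec hist :: "'ag failure_pattern \<Rightarrow> ('ag \<Rightarrow> 'v rel) \<Rightarrow> ('ag, 'm, 'v) gprofile
                 \<Rightarrow> nat \<Rightarrow> 'ag \<Rightarrow> ('ag, 'm) hist" where
  "hist F th sg 0 j = (\<lambda>k i. None)"
| "hist F th sg (Suc r) j =
     (\<lambda>k i. if k = Suc r
            then (if (i, j, Suc r) \<in> F then fst (sg i th r (hist F th sg r i)) j else None)
            else hist F th sg r j k i)"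

definition out_of :: "'ag failure_pattern \<Rightarrow> ('ag \<Rightarrow> 'v rel) \<Rightarrow> ('ag, 'm, 'v) gprofile
                      \<Rightarrow> 'ag \<Rightarrow> nat \<Rightarrow> ('ag \<Rightarrow> 'm option) \<times> 'v dec option" where
  "out_of F th sg i r = sg i th r (hist F th sg r i)"

text \<open>Agent i is still alive at the end of round r iff it has not crashed in rounds 1..r.
A crashed agent takes no further steps (in particular it makes no further decisions).\<close>
definition alive :: "'ag failure_pattern \<Rightarrow> 'ag \<Rightarrow> nat \<Rightarrow> bool" where
  "alive F i r \<longleftrightarrow> (\<forall>j r'. 1 \<le> r' \<and> r' \<le> r \<longrightarrow> (i, j, r') \<in> F)"

text \<open>Each agent decides at most once: its decision is its first non-bottom
decision out_of, produced while it is alive.\<close>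
definition decides :: "'ag failure_pattern \<Rightarrow> ('ag \<Rightarrow> 'v rel) \<Rightarrow> ('ag, 'm, 'v) gprofile
                       \<Rightarrow> 'ag \<Rightarrow> 'v dec \<Rightarrow> bool" where
  "decides F th sg i d \<longleftrightarrow>
     (\<exists>r. alive F i r \<and> snd (out_of F th sg i r) = Some d \<and>
          (\<forall>r' < r. snd (out_of F th sg i r') = None))"

definition consensus_run :: "'ag failure_pattern \<Rightarrow> ('ag \<Rightarrow> 'v rel) \<Rightarrow> ('ag, 'm, 'v) gprofile \<Rightarrow> bool" where
  "consensus_run F th sg \<longleftrightarrow>
     (\<forall>i. correct F i \<longrightarrow> (\<exists>d. decides F th sg i d)) \<and>
     (\<forall>i j d d'. decides F th sg i d \<and> decides F th sg j d' \<longrightarrow> d = d') \<and>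
     (\<forall>i d. decides F th sg i d \<longrightarrow> (\<exists>v j. d = Val v \<and> is_top (th j) v))"

definition legal_g :: "nat \<Rightarrow> ('ag, 'm, 'v) gprofile \<Rightarrow> bool" where
  "legal_g f sg \<longleftrightarrow> (\<forall>F th. admissible_fp f F \<longrightarrow> admissible_types th \<longrightarrow> consensus_run F th sg)"

definition embed :: "('ag \<Rightarrow> ('ag, 'm, 'v) strategy) \<Rightarrow> ('ag, 'm, 'v) gprofile" where
  "embed s = (\<lambda>i th. s i (th i))"

definition legal :: "nat \<Rightarrow> ('ag \<Rightarrow> ('ag, 'm, 'v) strategy) \<Rightarrow> bool" where
  "legal f s \<longleftrightarrow> legal_g f (embed s)"

definition utility_fun :: "('ag \<Rightarrow> 'v rel \<Rightarrow> 'v \<Rightarrow> real) \<Rightarrow> bool" where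
  "utility_fun u \<longleftrightarrow>
     (\<forall>i th v. strict_linear_order th \<longrightarrow> u i th v > 0) \<and>
     (\<forall>i th v w. strict_linear_order th \<longrightarrow> (v, w) \<in> th \<longrightarrow> u i th v < u i th w)"

definition utility :: "('ag \<Rightarrow> 'v rel \<Rightarrow> 'v \<Rightarrow> real) \<Rightarrow> 'ag failure_pattern \<Rightarrow> ('ag \<Rightarrow> 'v rel)
                       \<Rightarrow> ('ag, 'm, 'v) gprofile \<Rightarrow> 'ag \<Rightarrow> ereal" where
  "utility u F th sg i =
     (if \<not> correct F i then 0
      else if consensus_run F th sg
           then ereal (u i (th i) (THE v. decides F th sg i (Val v)))
           else -\<infinity>)"

definition colluder_strategy :: "'ag set \<Rightarrow> ('ag, 'm, 'v) gprofile \<Rightarrow> bool" where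
  "colluder_strategy C s' \<longleftrightarrow>
     (\<forall>i\<in>C. \<forall>th th'. (\<forall>j\<in>C. th j = th' j) \<longrightarrow> s' i th = s' i th')"

definition deviate :: "('ag \<Rightarrow> ('ag, 'm, 'v) strategy) \<Rightarrow> 'ag set \<Rightarrow> ('ag, 'm, 'v) gprofile
                       \<Rightarrow> ('ag, 'm, 'v) gprofile" where
  "deviate s C s' = (\<lambda>i th. if i \<in> C then s' i th else s i (th i))"

text \<open>Modified manipulation (i): as the original, but without requiring that all
colluders have the same most preferred value.\<close>
definition can_manipulate_weak ::
  "('ag \<Rightarrow> 'v rel \<Rightarrow> 'v \<Rightarrow> real) \<Rightarrow> nat \<Rightarrow> 'ag set \<Rightarrow> ('ag \<Rightarrow> ('ag, 'm, 'v) strategy) \<Rightarrow> bool" where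
  "can_manipulate_weak u f C s \<longleftrightarrow>
     (\<exists>s'. colluder_strategy C s' \<and> legal_g f (deviate s C s') \<and>
        (\<exists>F th. admissible_fp f F \<and> admissible_types th \<and>
           (\<exists>i\<in>C. utility u F th (deviate s C s') i > utility u F th (embed s) i)))"

definition can_manipulate_pareto ::
  "('ag \<Rightarrow> 'v rel \<Rightarrow> 'v \<Rightarrow> real) \<Rightarrow> nat \<Rightarrow> 'ag set \<Rightarrow> ('ag \<Rightarrow> ('ag, 'm, 'v) strategy) \<Rightarrow> bool" where
  "can_manipulate_pareto u f C s \<longleftrightarrow>
     (\<exists>s'. colluder_strategy C s' \<and> legal_g f (deviate s C s') \<and>
        (\<exists>F th. admissible_fp f F \<and> admissible_types th \<and>
           (\<forall>i\<in>C. utility u F th (deviate s C s') i \<ge> utility u F th (embed s) i) \<and>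
           (\<exists>i\<in>C. utility u F th (deviate s C s') i > utility u F th (embed s) i)))"

definition resilient_weak ::
  "('ag \<Rightarrow> 'v rel \<Rightarrow> 'v \<Rightarrow> real) \<Rightarrow> nat \<Rightarrow> nat \<Rightarrow> ('ag \<Rightarrow> ('ag, 'm, 'v) strategy) \<Rightarrow> bool" where
  "resilient_weak u c f s \<longleftrightarrow> legal f s \<and> (\<forall>C. card C \<le> c \<longrightarrow> \<not> can_manipulate_weak u f C s)"

definition resilient_pareto ::
  "('ag \<Rightarrow> 'v rel \<Rightarrow> 'v \<Rightarrow> real) \<Rightarrow> nat \<Rightarrow> nat \<Rightarrow> ('ag \<Rightarrow> ('ag, 'm, 'v) strategy) \<Rightarrow> bool" where
  "resilient_pareto u c f s \<longleftrightarrow> legal f s \<and> (\<forall>C. card C \<le> c \<longrightarrow> \<not> can_manipulate_pareto u f C s)"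

end

theory Submission
  imports Defs
begin

lemma hist_cong:
  assumes "\<And>i. sg i th = sg' i th'"
  shows "hist F th sg r = hist F th' sg' r"
proof (induction r)
  case 0 show ?case by simp
next
  case (Suc r) show ?case by (simp only: hist.simps Suc.IH assms)
qed

lemma decides_cong:
  assumes "\<And>i. sg i th = sg' i th'"
  shows "decides F th sg = decides F th' sg'"
proof -
  have H: "\<And>r. hist F th sg r = hist F th' sg' r" by (rule hist_cong) (rule assms)
  show ?thesis unfolding decides_def out_of_def fun_eq_iff by (simp add: H assms)
qed

lemma hist_agree:
  assumes "\<And>x y r'. r' \<le> R \<Longrightarrow> (x, y, r') \<in> F"
    and "r \<le> R"
  shows "hist F th sg r = hist UNIV th sg r"
  using assms(2)
proof (induction r)
  case 0 then show ?case by simp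
next
  case (Suc r)
  then have IH: "hist F th sg r = hist UNIV th sg r" by simp
  show ?case using Suc.prems assms(1) by (auto simp: IH fun_eq_iff)
qed

lemma decides_agree:
  assumes "\<And>x y r'. r' \<le> R \<Longrightarrow> (x, y, r') \<in> F"
    and "correct F j"
    and r: "snd (out_of UNIV th sg j r) = Some d" "\<forall>r'<r. snd (out_of UNIV th sg j r') = None"
    and "r \<le> R"
  shows "decides F th sg j d"
proof -
  have "\<And>r'. r' \<le> r \<Longrightarrow> out_of F th sg j r' = out_of UNIV th sg j r'"
  proof -
    fix r' assume "r' \<le> r"
    then have "r' \<le> R" using \<open>r \<le> R\<close> by simp
    then show "out_of F th sg j r' = out_of UNIV th sg j r'"
      by (simp add: out_of_def hist_agree[of R F, OF assms(1)])
  qed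
  then show ?thesis unfolding decides_def
    using r assms(2) by (intro exI[of _ r]) (auto simp: alive_def correct_def)
qed

lemma legal_decides_val:
  assumes "legal_g f sg" "admissible_fp f F" "admissible_types th" "correct F j"
  shows "\<exists>v. decides F th sg j (Val v) \<and> (\<exists>j'. is_top (th j') v)"
proof -
  have c: "consensus_run F th sg" using assms unfolding legal_g_def by blast
  then obtain d where d: "decides F th sg j d" using assms(4) unfolding consensus_run_def by blast
  then obtain v j' where "d = Val v" "is_top (th j') v" using c unfolding consensus_run_def by blast
  then show ?thesis using d by blast
qed

lemma admissible_UNIV: "admissible_fp f (UNIV :: 'ag failure_pattern)"
  by (simp add: admissible_fp_def correct_def)

lemma correct_UNIV: "correct UNIV j" by (simp add: correct_def)

lemma utility_val:
  assumes "consensus_run F th sg" "correct F j" "decides F th sg j (Val y)"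
  shows "utility u F th sg j = ereal (u j (th j) y)"
proof -
  have "(THE v. decides F th sg j (Val v)) = y"
    using assms(1,3) unfolding consensus_run_def by (intro the_equality) blast+
  then show ?thesis using assms by (simp add: utility_def)
qed

text \<open>The key deviation: colluder k copies j's type.\<close>
lemma gain:
  fixes s :: "'ag \<Rightarrow> ('ag, 'm, 'v) strategy"
  assumes leg: "legal f s" and F: "admissible_fp f F" and th: "admissible_types th"
    and kj: "k \<noteq> j" and cj: "correct F j"
    and dx: "decides F th (embed s) j (Val x)"
    and dy: "decides F (th(k := th j)) (embed s) j (Val y)"
    and xy: "(x, y) \<in> th j" and uf: "utility_fun u"
  shows "\<exists>s'. colluder_strategy {k, j} s' \<and> legal_g f (deviate s {k, j} s') \<and>
           utility u F th (deviate s {k, j} s') j > utility u F th (embed s) j \<and>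
           (\<not> correct F k \<longrightarrow> utility u F th (deviate s {k, j} s') k \<ge> utility u F th (embed s) k)"
proof -
  define s' :: "('ag, 'm, 'v) gprofile" where "s' = (\<lambda>i th. s i ((th(k := th j)) i))"
  have dev: "\<And>th i. deviate s {k, j} s' i th = embed s i (th(k := th j))"
    using kj by (auto simp: deviate_def s'_def embed_def)
  have cs: "colluder_strategy {k, j} s'"
    unfolding colluder_strategy_def s'_def by auto
  have dec: "\<And>F th. decides F th (deviate s {k, j} s') = decides F (th(k := th j)) (embed s)"
    by (rule decides_cong) (simp add: dev)
  have adm': "\<And>th. admissible_types th \<Longrightarrow> admissible_types (th(k := th j))"
    by (simp add: admissible_types_def)
  have cr: "\<And>(G::'ag failure_pattern) (t::'ag \<Rightarrow> 'v rel). admissible_fp f G \<Longrightarrow> admissible_types t \<Longrightarrow> consensus_run G t (deviate s {k, j} s')"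
  proof -
    fix G :: "'ag failure_pattern" and t :: "'ag \<Rightarrow> 'v rel"
    assume "admissible_fp f G" "admissible_types t"
    then have c: "consensus_run G (t(k := t j)) (embed s)"
      using leg adm' unfolding legal_def legal_g_def by blast
    show "consensus_run G t (deviate s {k, j} s')"
      unfolding consensus_run_def dec
    proof (intro conjI allI impI)
      fix i d assume "decides G (t(k := t j)) (embed s) i d"
      then obtain v j' where "d = Val v" "is_top ((t(k := t j)) j') v"
        using c unfolding consensus_run_def by blast
      then show "\<exists>v j. d = Val v \<and> is_top (t j) v"
        by (cases "j' = k") auto
    qed (use c in \<open>auto simp: consensus_run_def\<close>)
  qed
  have lg: "legal_g f (deviate s {k, j} s')" using cr by (simp add: legal_g_def)
  have c0: "consensus_run F th (embed s)" using leg F th by (simp add: legal_def legal_g_def)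
  have c1: "consensus_run F th (deviate s {k, j} s')" using cr F th by blast
  have u0: "utility u F th (embed s) j = ereal (u j (th j) x)"
    by (rule utility_val[OF c0 cj dx])
  have u1: "utility u F th (deviate s {k, j} s') j = ereal (u j (th j) y)"
    by (rule utility_val[OF c1 cj]) (simp add: dec dy)
  have "u j (th j) x < u j (th j) y"
    using uf th xy by (simp add: utility_fun_def admissible_types_def)
  then have "utility u F th (deviate s {k, j} s') j > utility u F th (embed s) j"
    using u0 u1 by simp
  moreover have "\<not> correct F k \<longrightarrow> utility u F th (deviate s {k, j} s') k \<ge> utility u F th (embed s) k"
    by (simp add: utility_def)
  ultimately show ?thesis using cs lg by blast
qed

definition rk :: "('v \<Rightarrow> nat) \<Rightarrow> 'v \<Rightarrow> 'v \<Rightarrow> nat" where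
  "rk g a v = (if v = a then 0 else Suc (g v))"

definition ordr :: "('v \<Rightarrow> nat) \<Rightarrow> 'v \<Rightarrow> 'v rel" where
  "ordr g a = {(x, y). rk g a y < rk g a x}"

lemma ordr_slo:
  assumes "inj g"
  shows "strict_linear_order (ordr g a)"
proof -
  have "inj (rk g a)" using assms unfolding inj_def rk_def by auto
  then show ?thesis
    unfolding strict_linear_order_on_def ordr_def trans_def irrefl_def total_on_def inj_def
    by (auto simp: linorder_neq_iff) (metis linorder_neqE_nat)
qed

lemma ordr_top: "is_top (ordr g a) v \<longleftrightarrow> v = a"
  unfolding is_top_def ordr_def rk_def by auto

lemma ordr_top_pref: "w \<noteq> a \<Longrightarrow> (w, a) \<in> ordr g a"
  unfolding ordr_def rk_def by auto

lemma exists_inj: "\<exists>g :: 'v::finite \<Rightarrow> nat. inj g"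
  using finite_imp_inj_to_nat_seg[of "UNIV :: 'v set"] by auto

lemma finite_down:
  fixes P :: "'a set \<Rightarrow> bool"
  assumes "\<And>S k. k \<in> S \<Longrightarrow> P S \<Longrightarrow> P (S - {k})"
  shows "finite S \<Longrightarrow> P S \<Longrightarrow> P {}"
proof (induction S rule: finite_induct)
  case empty then show ?case .
next
  case (insert x F)
  then have "P (insert x F - {x})" using assms by blast
  then show ?case using insert by simp
qed

lemma main_exists:
  fixes s :: "'ag::finite \<Rightarrow> ('ag, 'm, 'v::finite) strategy"
  assumes leg: "legal f s" and vc: "card (UNIV :: 'v set) \<ge> 2" and ac: "card (UNIV :: 'ag set) \<ge> 2"
  shows "\<exists>th k j x y. admissible_types th \<and> k \<noteq> j \<and>
           decides UNIV th (embed s) j (Val x) \<and> decides UNIV (th(k := th j)) (embed s) j (Val y) \<and>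
           (x, y) \<in> th j"
proof -
  obtain g :: "'v \<Rightarrow> nat" where g: "inj g" using exists_inj by blast
  obtain a b :: 'v where ab: "a \<noteq> b"
  proof -
    have "\<not> (\<forall>a b :: 'v. a = b)"
    proof
      assume "\<forall>a b :: 'v. a = b"
      then have "(UNIV :: 'v set) \<subseteq> {undefined}" by auto
      then have "card (UNIV :: 'v set) \<le> 1" using card_mono[of "{undefined}" "UNIV :: 'v set"] by simp
      then show False using vc by simp
    qed
    then show ?thesis using that by blast
  qed
  define A where "A = ordr g a"
  define B where "B = ordr g b"
  define thS :: "'ag set \<Rightarrow> 'ag \<Rightarrow> 'v rel" where "thS S = (\<lambda>i. if i \<in> S then B else A)" for S
  have admS: "admissible_types (thS S)" for S
    using ordr_slo[OF g] by (simp add: admissible_types_def thS_def A_def B_def)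
  have lg: "legal_g f (embed s)" using leg by (simp add: legal_def)
  have cS: "consensus_run UNIV (thS S) (embed s)" for S
    using lg admS admissible_UNIV unfolding legal_g_def by blast
  have decab: "\<exists>v. (v = a \<or> v = b) \<and> decides UNIV (thS S) (embed s) i (Val v)" for S i
  proof -
    obtain v j' where "decides UNIV (thS S) (embed s) i (Val v)" "is_top (thS S j') v"
      using legal_decides_val[OF lg admissible_UNIV admS correct_UNIV] by blast
    then show ?thesis by (auto simp: thS_def A_def B_def ordr_top split: if_splits)
  qed
  define Db where "Db S = (\<forall>i. decides UNIV (thS S) (embed s) i (Val b))" for S
  have uniq: "decides UNIV (thS S) (embed s) i d \<Longrightarrow> decides UNIV (thS S) (embed s) i' d' \<Longrightarrow> d = d'" for S i i' d d'
    using cS unfolding consensus_run_def by blast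
  have nDb: "\<not> Db S \<Longrightarrow> decides UNIV (thS S) (embed s) i (Val a)" for S i
  proof -
    assume n: "\<not> Db S"
    then obtain i' where i': "\<not> decides UNIV (thS S) (embed s) i' (Val b)" unfolding Db_def by blast
    obtain v where "(v = a \<or> v = b)" "decides UNIV (thS S) (embed s) i (Val v)" using decab by blast
    moreover obtain v' where "(v' = a \<or> v' = b)" "decides UNIV (thS S) (embed s) i' (Val v')" using decab by blast
    ultimately show ?thesis using i' uniq by (metis dec.inject)
  qed
  have Dbb: "Db S \<Longrightarrow> decides UNIV (thS S) (embed s) i (Val b)" for S i by (simp add: Db_def)
  have topS: "decides UNIV (thS S) (embed s) i (Val v) \<Longrightarrow> \<exists>j'. is_top (thS S j') v" for S i v
    using cS unfolding consensus_run_def by blast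
  have "\<not> Db {}"
  proof
    assume "Db {}"
    then obtain j' where "is_top (thS {} j') b" using topS Dbb by blast
    then show False using ab by (simp add: thS_def A_def ordr_top)
  qed
  moreover have "Db UNIV"
  proof (rule ccontr)
    assume "\<not> Db UNIV"
    then obtain j' where "is_top (thS UNIV j') a" using topS nDb by blast
    then show False using ab by (simp add: thS_def B_def ordr_top)
  qed
  ultimately have "\<exists>S k. k \<in> S \<and> Db S \<and> \<not> Db (S - {k})"
  proof -
    assume n0: "\<not> Db {}" and u: "Db UNIV"
    show ?thesis
    proof (rule ccontr)
      assume "\<not> (\<exists>S k. k \<in> S \<and> Db S \<and> \<not> Db (S - {k}))"
      then have st: "\<And>S k. k \<in> S \<Longrightarrow> Db S \<Longrightarrow> Db (S - {k})" by blast
      have "Db {}" by (rule finite_down[of Db, OF st finite u]) assumption+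
      then show False using n0 by simp
    qed
  qed
  then obtain S k where Sk: "k \<in> S" "Db S" "\<not> Db (S - {k})" by blast
  have ab_in: "(b, a) \<in> A" "(a, b) \<in> B" unfolding A_def B_def
    by (rule ordr_top_pref, use ab in simp)+
  show ?thesis
  proof (cases "\<exists>j. j \<notin> S")
    case True
    then obtain j where j: "j \<notin> S" by blast
    have eq: "(thS S)(k := thS S j) = thS (S - {k})"
      using j by (auto simp: thS_def fun_eq_iff)
    have "k \<noteq> j" using Sk(1) j by blast
    moreover have "decides UNIV (thS S) (embed s) j (Val b)" using Dbb[OF Sk(2)] by simp
    moreover have "decides UNIV ((thS S)(k := thS S j)) (embed s) j (Val a)"
      unfolding eq using nDb[OF Sk(3)] by simp
    moreover have "(b, a) \<in> thS S j" using j ab_in by (simp add: thS_def)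
    ultimately show ?thesis
      apply -
      apply (rule exI[of _ "thS S"], rule exI[of _ k], rule exI[of _ j], rule exI[of _ b], rule exI[of _ a])
      using admS by blast
  next
    case False
    then have SU: "S = UNIV" by auto
    obtain j where j: "j \<noteq> k"
    proof -
      have "\<not> (UNIV :: 'ag set) \<subseteq> {k}"
      proof
        assume "(UNIV :: 'ag set) \<subseteq> {k}"
        then have "card (UNIV :: 'ag set) \<le> 1" using card_mono[of "{k}" UNIV] by simp
        then show False using ac by simp
      qed
      then show ?thesis using that by blast
    qed
    have eq: "(thS (UNIV - {k}))(k := thS (UNIV - {k}) j) = thS UNIV"
      using j by (auto simp: thS_def fun_eq_iff)
    have "decides UNIV (thS (UNIV - {k})) (embed s) j (Val a)" using nDb[OF Sk(3)] SU by simp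
    moreover have "decides UNIV ((thS (UNIV - {k}))(k := thS (UNIV - {k}) j)) (embed s) j (Val b)"
      unfolding eq using Dbb[OF Sk(2)] SU by simp
    moreover have "(a, b) \<in> thS (UNIV - {k}) j" using j ab_in by (simp add: thS_def)
    ultimately show ?thesis
      apply -
      apply (rule exI[of _ "thS (UNIV - {k})"], rule exI[of _ k], rule exI[of _ j], rule exI[of _ a], rule exI[of _ b])
      using admS j by blast
  qed
qed

theorem proposition3:
  fixes u :: "'ag::finite \<Rightarrow> 'v::finite rel \<Rightarrow> 'v \<Rightarrow> real"
  assumes "card (UNIV :: 'v set) \<ge> 3"
    and "card (UNIV :: 'ag set) \<ge> 2"
    and "utility_fun u"
  shows "(\<forall>c f. c \<ge> 2 \<longrightarrow>
            \<not> (\<exists>s :: 'ag \<Rightarrow> ('ag, 'm, 'v) strategy. resilient_weak u c f s)) \<and>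
         (\<forall>c f. c \<ge> 2 \<longrightarrow> f \<ge> 1 \<longrightarrow>
            \<not> (\<exists>s :: 'ag \<Rightarrow> ('ag, 'm, 'v) strategy. resilient_pareto u c f s))"
proof -
  have v2: "2 \<le> card (UNIV::'v set)" using assms(1) by linarith
  show ?thesis
proof (intro conjI allI impI notI)
  fix c f :: nat assume c2: "2 \<le> c"
  assume "\<exists>s :: 'ag \<Rightarrow> ('ag, 'm, 'v) strategy. resilient_weak u c f s"
  then obtain s :: "'ag \<Rightarrow> ('ag, 'm, 'v) strategy" where r: "resilient_weak u c f s" by blast
  then have leg: "legal f s" by (simp add: resilient_weak_def)
  obtain th k j x y where m: "admissible_types th" "k \<noteq> j"
      "decides UNIV th (embed s) j (Val x)" "decides UNIV (th(k := th j)) (embed s) j (Val y)"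
      "(x, y) \<in> th j"
    using main_exists[OF leg v2 assms(2)] by blast
  obtain s' where s': "colluder_strategy {k, j} s'" "legal_g f (deviate s {k, j} s')"
      "utility u UNIV th (deviate s {k, j} s') j > utility u UNIV th (embed s) j"
    using gain[OF leg admissible_UNIV m(1,2) correct_UNIV m(3,4,5) assms(3)] by blast
  have X: "\<exists>i\<in>{k, j}. utility u UNIV th (deviate s {k, j} s') i > utility u UNIV th (embed s) i"
    using s'(3) by blast
  have "can_manipulate_weak u f {k, j} s"
    unfolding can_manipulate_weak_def
    apply (rule exI[of _ s'])
    apply (rule conjI, rule s'(1))
    apply (rule conjI, rule s'(2))
    apply (rule exI[of _ UNIV], rule exI[of _ th])
    using admissible_UNIV m(1) X by blast
  moreover have "card {k, j} \<le> c" using m(2) c2 by simp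
  ultimately show False using r by (simp add: resilient_weak_def)
next
  fix c f :: nat assume c2: "2 \<le> c" and f1: "1 \<le> f"
  assume "\<exists>s :: 'ag \<Rightarrow> ('ag, 'm, 'v) strategy. resilient_pareto u c f s"
  then obtain s :: "'ag \<Rightarrow> ('ag, 'm, 'v) strategy" where r: "resilient_pareto u c f s" by blast
  then have leg: "legal f s" by (simp add: resilient_pareto_def)
  obtain th k j x y where m: "admissible_types th" "k \<noteq> j"
      "decides UNIV th (embed s) j (Val x)" "decides UNIV (th(k := th j)) (embed s) j (Val y)"
      "(x, y) \<in> th j"
    using main_exists[OF leg v2 assms(2)] by blast
  obtain r0 where r0: "snd (out_of UNIV th (embed s) j r0) = Some (Val x)"
      "\<forall>r'<r0. snd (out_of UNIV th (embed s) j r') = None"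
    using m(3) unfolding decides_def by blast
  obtain r1 where r1: "snd (out_of UNIV (th(k := th j)) (embed s) j r1) = Some (Val y)"
      "\<forall>r'<r1. snd (out_of UNIV (th(k := th j)) (embed s) j r') = None"
    using m(4) unfolding decides_def by blast
  define R where "R = max r0 r1"
  define F :: "'ag failure_pattern" where "F = {(a, b, r). a \<noteq> k \<or> r \<le> R}"
  have inF: "\<And>a b r'. r' \<le> R \<Longrightarrow> (a, b, r') \<in> F" by (simp add: F_def)
  have corr: "correct F i \<longleftrightarrow> i \<noteq> k" for i
    unfolding correct_def F_def using not_less_eq_eq by auto
  have "{i. \<not> correct F i} = {k}" using corr by auto
  then have aF: "admissible_fp f F" using f1 unfolding admissible_fp_def F_def by auto
  have cj: "correct F j" using corr m(2) by simp
  have d0: "decides F th (embed s) j (Val x)"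
    using decides_agree[OF inF cj r0(1) r0(2)] unfolding R_def by simp
  have d1: "decides F (th(k := th j)) (embed s) j (Val y)"
    using decides_agree[OF inF cj r1(1) r1(2)] unfolding R_def by simp
  obtain s' where s': "colluder_strategy {k, j} s'" "legal_g f (deviate s {k, j} s')"
      "utility u F th (deviate s {k, j} s') j > utility u F th (embed s) j"
      "\<not> correct F k \<longrightarrow> utility u F th (deviate s {k, j} s') k \<ge> utility u F th (embed s) k"
    using gain[OF leg aF m(1,2) cj d0 d1 m(5) assms(3)] by blast
  have "\<forall>i\<in>{k, j}. utility u F th (deviate s {k, j} s') i \<ge> utility u F th (embed s) i"
    using s'(3,4) corr by auto
  moreover have X: "\<exists>i\<in>{k, j}. utility u F th (deviate s {k, j} s') i > utility u F th (embed s) i"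
    using s'(3) by blast
  ultimately have "can_manipulate_pareto u f {k, j} s"
    unfolding can_manipulate_pareto_def
    apply -
    apply (rule exI[of _ s'])
    apply (rule conjI, rule s'(1))
    apply (rule conjI, rule s'(2))
    apply (rule exI[of _ F], rule exI[of _ th])
    using aF m(1) by blast
  moreover have "card {k, j} \<le> c" using m(2) c2 by simp
  ultimately show False using r by (simp add: resilient_pareto_def)
qed
qed

end
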